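(* Let $N\ge 1$, $d\ge 1$, let $p_1,\dots,p_N>0$ with $\sum_{c=1}^N p_c=1$, and let $f^1,\dots,f^N:\mathbb{R}^d\to\mathbb{R}$ be differentiable functions such that each $f^c$ is $L$-smooth and $m$-strongly convex, where $0<m\le L$. Let $\eta\in(0,\frac{1}{L+m}]$. Then for any vectors $\theta^1,\dots,\theta^N,\beta^1,\dots,\beta^N\in\mathbb{R}^d$, writing $\theta=\sum_{c=1}^N p_c\theta^c$, $\beta=\sum_{c=1}^N p_c\beta^c$, $G(\theta^{1:N})=\sum_{c=1}^N p_c\nabla f^c(\theta^c)$ and $G(\beta^{1:N})=\sum_{c=1}^N p_c\nabla f^c(\beta^c)$, we have $$\big\|\beta-\theta-\eta\big(G(\beta^{1:N})-G(\theta^{1:N})\big)\big\|_2^2\le (1-\eta m)\|\beta-\theta\|_2^2+4\eta L\sum_{c=1}^N p_c\big(\|\beta^c-\beta\|_2^2+\|\theta^c-\theta\|_2^2\big).$$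
   Context: A differentiable $g:\mathbb{R}^d\to\mathbb{R}$ is $L$-smooth if $g(y)\le g(x)+\langle\nabla g(x),y-x\rangle+\frac L2\|y-x\|_2^2$ for all $x,y$ (equivalently $\nabla g$ is $L$-Lipschitz), and $m$-strongly convex if $g(x)\ge g(y)+\langle\nabla g(y),x-y\rangle+\frac m2\|x-y\|_2^2$ for all $x,y$. *)

theory Defs
  imports "HOL-Analysis.Analysis"
begin

text \<open>The gradient of g is passed explicitly as dg; elsewhere it is tied to g via has_derivative.\<close>

definition L_smooth :: "('a::real_inner \<Rightarrow> real) \<Rightarrow> ('a \<Rightarrow> 'a) \<Rightarrow> real \<Rightarrow> bool" where
  "L_smooth g dg L \<longleftrightarrow>
     (\<forall>x y. g y \<le> g x + inner (dg x) (y - x) + L / 2 * (norm (y - x))\<^sup>2)"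

definition strongly_convex :: "('a::real_inner \<Rightarrow> real) \<Rightarrow> ('a \<Rightarrow> 'a) \<Rightarrow> real \<Rightarrow> bool" where
  "strongly_convex g dg m \<longleftrightarrow>
     (\<forall>x y. g x \<ge> g y + inner (dg y) (x - y) + m / 2 * (norm (x - y))\<^sup>2)"

end

theory Submission imports Defs begin

lemma coco_aux:
  fixes h :: "'a::real_inner \<Rightarrow> real" and dh :: "'a \<Rightarrow> 'a"
  assumes sm: "\<And>x y. h y \<le> h x + inner (dh x) (y - x) + K / 2 * (norm (y - x))\<^sup>2"
    and cv: "\<And>x y. h x \<ge> h y + inner (dh y) (x - y)"
  shows "(2*t - K*t^2) * (norm (dh x - dh y))\<^sup>2 \<le> inner (x - y) (dh x - dh y)"
proof -
  have one: "h a - inner (dh a) a \<le> h b - inner (dh a) b - (t - K/2*t^2) * (norm (dh b - dh a))\<^sup>2" for a b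
  proof -
    define g where "g = dh b - dh a"
    have 1: "h (b - t *\<^sub>R g) \<ge> h a + inner (dh a) (b - t *\<^sub>R g - a)" using cv by blast
    have 2: "h (b - t *\<^sub>R g) \<le> h b + inner (dh b) (b - t *\<^sub>R g - b) + K/2 * (norm (b - t *\<^sub>R g - b))\<^sup>2"
      using sm by blast
    have n: "(norm (b - t *\<^sub>R g - b))\<^sup>2 = t^2 * (norm g)\<^sup>2"
      by (simp add: power_mult_distrib)
    have i: "inner (dh b) (b - t *\<^sub>R g - b) - inner (dh a) (b - t *\<^sub>R g - a)
        = - inner (dh a) b + inner (dh a) a - t * (norm g)\<^sup>2"
      by (simp add: g_def inner_diff_left inner_diff_right power2_norm_eq_inner algebra_simps inner_commute)
    show ?thesis using 1 2 n i unfolding g_def[symmetric] by (simp add: algebra_simps)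
  qed
  have a: "h x - inner (dh x) x \<le> h y - inner (dh x) y - (t - K/2*t^2) * (norm (dh y - dh x))\<^sup>2" by (rule one)
  have b: "h y - inner (dh y) y \<le> h x - inner (dh y) x - (t - K/2*t^2) * (norm (dh x - dh y))\<^sup>2" by (rule one)
  have c: "norm (dh y - dh x) = norm (dh x - dh y)" by (rule norm_minus_commute)
  have d: "inner (x - y) (dh x - dh y) = inner (dh x) x - inner (dh x) y - inner (dh y) x + inner (dh y) y"
    by (simp add: inner_diff_left inner_diff_right inner_commute)
  show ?thesis using a b c d by (simp add: algebra_simps)
qed

lemma coco_convex:
  fixes h :: "'a::real_inner \<Rightarrow> real" and dh :: "'a \<Rightarrow> 'a"
  assumes K: "K \<ge> 0"
    and sm: "\<And>x y. h y \<le> h x + inner (dh x) (y - x) + K / 2 * (norm (y - x))\<^sup>2"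
    and cv: "\<And>x y. h x \<ge> h y + inner (dh y) (x - y)"
  shows "(norm (dh x - dh y))\<^sup>2 \<le> K * inner (x - y) (dh x - dh y)"
proof (cases "K = 0")
  case True
  define G where "G = (norm (dh x - dh y))\<^sup>2"
  define s where "s = inner (x - y) (dh x - dh y)"
  have all: "(2*t) * G \<le> s" for t using coco_aux[OF sm cv, of t x y] True unfolding G_def s_def by simp
  have "G \<le> 0"
  proof (rule ccontr)
    assume "\<not> G \<le> 0"
    hence G: "G > 0" by simp
    have "(2*((\<bar>s\<bar>+1)/(2*G))) * G \<le> s" by (rule all)
    also have "(2*((\<bar>s\<bar>+1)/(2*G))) * G = \<bar>s\<bar> + 1" using G by (simp add: field_simps)
    finally show False by simp
  qed
  then show ?thesis using True unfolding G_def by simp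
next
  case False
  hence Kp: "K > 0" using K by simp
  have "(2*(1/K) - K*(1/K)^2) * (norm (dh x - dh y))\<^sup>2 \<le> inner (x - y) (dh x - dh y)"
    by (rule coco_aux[OF sm cv])
  moreover have "2*(1/K) - K*(1/K)^2 = 1/K" using Kp by (simp add: field_simps power2_eq_square)
  ultimately have "(1/K) * (norm (dh x - dh y))\<^sup>2 \<le> inner (x - y) (dh x - dh y)" by simp
  hence "K * ((1/K) * (norm (dh x - dh y))\<^sup>2) \<le> K * inner (x - y) (dh x - dh y)"
    using Kp by (intro mult_left_mono) auto
  moreover have "K * ((1/K) * (norm (dh x - dh y))\<^sup>2) = (norm (dh x - dh y))\<^sup>2" using Kp by simp
  ultimately show ?thesis by simp
qed

lemma coco_strong:
  fixes f :: "'a::real_inner \<Rightarrow> real" and df :: "'a \<Rightarrow> 'a"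
  assumes sm: "L_smooth f df L" and sc: "strongly_convex f df m" and mL: "m \<le> L"
  shows "(norm (df x - df y))\<^sup>2 + m * L * (norm (x - y))\<^sup>2 \<le> (L + m) * inner (x - y) (df x - df y)"
proof -
  define h where "h = (\<lambda>z. f z - m/2 * (norm z)\<^sup>2)"
  define dh where "dh = (\<lambda>z. df z - m *\<^sub>R z)"
  have sm': "h y \<le> h x + inner (dh x) (y - x) + (L - m) / 2 * (norm (y - x))\<^sup>2" for x y
  proof -
    have "f y \<le> f x + inner (df x) (y - x) + L / 2 * (norm (y - x))\<^sup>2" using sm unfolding L_smooth_def by blast
    moreover have "h x + inner (dh x) (y - x) + (L - m) / 2 * (norm (y - x))\<^sup>2
      = f x + inner (df x) (y - x) + L / 2 * (norm (y - x))\<^sup>2 - m/2 * (norm y)\<^sup>2"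
      unfolding h_def dh_def
      apply (simp add: power2_norm_eq_inner inner_diff_left inner_diff_right algebra_simps inner_commute)
      by (simp add: field_simps)
    ultimately show ?thesis unfolding h_def by linarith
  qed
  have cv': "h x \<ge> h y + inner (dh y) (x - y)" for x y
  proof -
    have "f x \<ge> f y + inner (df y) (x - y) + m / 2 * (norm (x - y))\<^sup>2" using sc unfolding strongly_convex_def by blast
    thus ?thesis unfolding h_def dh_def
      by (simp add: power2_norm_eq_inner inner_diff_left inner_diff_right algebra_simps inner_commute)
  qed
  have "(norm (dh x - dh y))\<^sup>2 \<le> (L - m) * inner (x - y) (dh x - dh y)"
    by (rule coco_convex[OF _ sm' cv']) (use mL in simp)
  thus ?thesis unfolding dh_def
    by (simp add: power2_norm_eq_inner inner_diff_left inner_diff_right algebra_simps inner_commute)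
qed

lemma jensen_sq:
  fixes x :: "nat \<Rightarrow> 'a::real_inner"
  assumes fin: "finite I" and p: "\<And>c. c \<in> I \<Longrightarrow> p c \<ge> 0" and ps: "sum p I = 1"
  shows "(norm (\<Sum>c\<in>I. p c *\<^sub>R x c))\<^sup>2 \<le> (\<Sum>c\<in>I. p c * (norm (x c))\<^sup>2)"
proof -
  define s where "s = (\<Sum>c\<in>I. p c *\<^sub>R x c)"
  have "0 \<le> (\<Sum>c\<in>I. p c * (norm (x c - s))\<^sup>2)" by (intro sum_nonneg) (simp add: p)
  also have "\<dots> = (\<Sum>c\<in>I. p c * (norm (x c))\<^sup>2 - 2 * (p c * inner (x c) s) + p c * (norm s)\<^sup>2)"
    by (intro sum.cong refl) (simp add: power2_norm_eq_inner inner_diff_left inner_diff_right inner_commute algebra_simps)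
  also have "\<dots> = (\<Sum>c\<in>I. p c * (norm (x c))\<^sup>2) - 2 * (\<Sum>c\<in>I. p c * inner (x c) s) + (\<Sum>c\<in>I. p c) * (norm s)\<^sup>2"
    by (simp add: sum.distrib sum_subtractf sum_distrib_left sum_distrib_right)
  also have "(\<Sum>c\<in>I. p c * inner (x c) s) = inner s s"
    unfolding s_def by (simp add: inner_sum_left)
  finally show ?thesis using ps unfolding s_def[symmetric] by (simp add: power2_norm_eq_inner)
qed

lemma scalar_step:
  fixes a w D n E S L m \<eta> :: real
  assumes co: "D + m*L*n \<le> (L+m)*a" and yw: "2*w \<le> 2*L*E + D/(2*L)" and ES: "E \<le> 2*S"
    and eta: "0 < \<eta>" "\<eta> \<le> 1/(L+m)" and mm: "0 < m" "m \<le> L" and D: "D \<ge> 0" and n: "n \<ge> 0"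
  shows "-2*\<eta>*(a - w) + \<eta>^2*D \<le> - \<eta>*m*n + 4*\<eta>*L*S"
proof -
  have Lm: "L + m > 0" using mm by simp
  have e0: "\<eta>*(L+m) \<le> 1" using eta Lm by (simp add: field_simps)
  have e0': "D*(\<eta>*(L+m)) \<le> D*1" using e0 D by (intro mult_left_mono) auto
  have e1: "\<eta> * D \<le> D/(L+m)" using e0' Lm by (simp add: field_simps)
  have e2: "-2*a \<le> -2*(D + m*L*n)/(L+m)" using co Lm by (simp add: field_simps)
  have e3: "D/(2*L) \<le> D/(L+m)" using D mm by (intro divide_left_mono) auto
  have e4: "m * n \<le> 2*m*L*n/(L+m)" using mm n Lm
    by (simp add: field_simps) (metis mult_left_mono mult.assoc mult.commute add_mono order_refl mult_nonneg_nonneg less_imp_le)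
  have "-2*(a - w) + \<eta>*D \<le> - m*n + 4*L*S"
  proof -
    have "-2*(a-w) + \<eta>*D \<le> -2*(D + m*L*n)/(L+m) + (2*L*E + D/(2*L)) + D/(L+m)" using e1 e2 yw by (simp add: algebra_simps)
    also have "\<dots> = -(D/(L+m)) - 2*m*L*n/(L+m) + 2*L*E + D/(2*L)" by (simp add: add_divide_distrib diff_divide_distrib algebra_simps)
    also have "\<dots> \<le> - m*n + 2*L*E" using e3 e4 by linarith
    also have "\<dots> \<le> - m*n + 4*L*S" using ES mm by simp
    finally show ?thesis .
  qed
  hence "\<eta> * (-2*(a - w) + \<eta>*D) \<le> \<eta> * (- m*n + 4*L*S)" using eta by (intro mult_left_mono) auto
  thus ?thesis by (simp add: algebra_simps power2_eq_square)
qed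

theorem lemma4p1:
  fixes N :: nat and p :: "nat \<Rightarrow> real"
    and f :: "nat \<Rightarrow> real ^ 'd \<Rightarrow> real" and gradf :: "nat \<Rightarrow> real ^ 'd \<Rightarrow> real ^ 'd"
    and L m \<eta> :: real
    and \<theta>s \<beta>s :: "nat \<Rightarrow> real ^ 'd"
  assumes N: "N \<ge> 1"
    and p_pos: "\<And>c. c \<in> {1..N} \<Longrightarrow> p c > 0"
    and p_sum: "(\<Sum>c=1..N. p c) = 1"
    and grad: "\<And>c x. c \<in> {1..N} \<Longrightarrow> (f c has_derivative (\<lambda>h. inner (gradf c x) h)) (at x)"
    and smooth: "\<And>c. c \<in> {1..N} \<Longrightarrow> L_smooth (f c) (gradf c) L"
    and sconv: "\<And>c. c \<in> {1..N} \<Longrightarrow> strongly_convex (f c) (gradf c) m"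
    and m_pos: "0 < m" and mL: "m \<le> L"
    and eta_pos: "0 < \<eta>" and eta_le: "\<eta> \<le> 1 / (L + m)"
  shows
    "let \<theta> = (\<Sum>c=1..N. p c *\<^sub>R \<theta>s c);
         \<beta> = (\<Sum>c=1..N. p c *\<^sub>R \<beta>s c);
         G\<theta> = (\<Sum>c=1..N. p c *\<^sub>R gradf c (\<theta>s c));
         G\<beta> = (\<Sum>c=1..N. p c *\<^sub>R gradf c (\<beta>s c))
     in (norm (\<beta> - \<theta> - \<eta> *\<^sub>R (G\<beta> - G\<theta>)))\<^sup>2
        \<le> (1 - \<eta> * m) * (norm (\<beta> - \<theta>))\<^sup>2
          + 4 * \<eta> * L * (\<Sum>c=1..N. p c * ((norm (\<beta>s c - \<beta>))\<^sup>2 + (norm (\<theta>s c - \<theta>))\<^sup>2))"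
proof -
  define I where "I = {1..N}"
  have fin: "finite I" unfolding I_def by simp
  have pnn: "\<And>c. c \<in> I \<Longrightarrow> p c \<ge> 0" using p_pos unfolding I_def by (simp add: less_imp_le)
  have ps: "sum p I = 1" using p_sum unfolding I_def by simp
  define \<theta> where "\<theta> = (\<Sum>c=1..N. p c *\<^sub>R \<theta>s c)"
  define \<beta> where "\<beta> = (\<Sum>c=1..N. p c *\<^sub>R \<beta>s c)"
  define G\<theta> where "G\<theta> = (\<Sum>c=1..N. p c *\<^sub>R gradf c (\<theta>s c))"
  define G\<beta> where "G\<beta> = (\<Sum>c=1..N. p c *\<^sub>R gradf c (\<beta>s c))"
  define d where "d = (\<lambda>c. \<beta>s c - \<theta>s c)"
  define \<Delta> where "\<Delta> = (\<lambda>c. gradf c (\<beta>s c) - gradf c (\<theta>s c))"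
  define u where "u = \<beta> - \<theta>"
  define g where "g = G\<beta> - G\<theta>"
  define S where "S = (\<lambda>c. (norm (\<beta>s c - \<beta>))\<^sup>2 + (norm (\<theta>s c - \<theta>))\<^sup>2)"
  have hu: "u = (\<Sum>c\<in>I. p c *\<^sub>R d c)"
    unfolding u_def \<beta>_def \<theta>_def d_def I_def by (simp add: sum_subtractf scaleR_diff_right)
  have hg: "g = (\<Sum>c\<in>I. p c *\<^sub>R \<Delta> c)"
    unfolding g_def G\<beta>_def G\<theta>_def \<Delta>_def I_def by (simp add: sum_subtractf scaleR_diff_right)
  have expand: "(norm (u - \<eta> *\<^sub>R g))\<^sup>2 = (norm u)\<^sup>2 - 2*\<eta>*inner u g + \<eta>^2 * (norm g)\<^sup>2"
    unfolding power2_norm_eq_inner by (simp add: inner_diff_left inner_diff_right inner_commute algebra_simps power2_eq_square)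
  have ug: "inner u g = (\<Sum>c\<in>I. p c * inner u (\<Delta> c))"
    unfolding hg by (simp add: inner_sum_right)
  have jg: "(norm g)\<^sup>2 \<le> (\<Sum>c\<in>I. p c * (norm (\<Delta> c))\<^sup>2)"
    unfolding hg by (rule jensen_sq[OF fin pnn ps])
  have ju: "(norm u)\<^sup>2 \<le> (\<Sum>c\<in>I. p c * (norm (d c))\<^sup>2)"
    unfolding hu by (rule jensen_sq[OF fin pnn ps])
  have Lpos: "L > 0" using m_pos mL by simp
  have perc: "-2*\<eta>*inner u (\<Delta> c) + \<eta>^2 * (norm (\<Delta> c))\<^sup>2 \<le> -\<eta>*m*(norm (d c))\<^sup>2 + 4*\<eta>*L*S c"
    if c: "c \<in> I" for c
  proof -
    define e where "e = d c - u"
    have cI: "c \<in> {1..N}" using c unfolding I_def .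
    have co: "(norm (\<Delta> c))\<^sup>2 + m*L*(norm (d c))\<^sup>2 \<le> (L+m) * inner (d c) (\<Delta> c)"
      unfolding \<Delta>_def d_def by (rule coco_strong[OF smooth[OF cI] sconv[OF cI] mL])
    have aw: "inner u (\<Delta> c) = inner (d c) (\<Delta> c) - inner e (\<Delta> c)"
      unfolding e_def by (simp add: inner_diff_left)
    have q: "0 \<le> (norm ((2*L) *\<^sub>R e - \<Delta> c))\<^sup>2" by simp
    also have "\<dots> = 4*L^2*(norm e)\<^sup>2 - 4*L*inner e (\<Delta> c) + (norm (\<Delta> c))\<^sup>2"
      unfolding power2_norm_eq_inner by (simp add: inner_diff_left inner_diff_right inner_commute algebra_simps power2_eq_square)
    finally have q2: "4*L*inner e (\<Delta> c) \<le> 4*L^2*(norm e)\<^sup>2 + (norm (\<Delta> c))\<^sup>2" by simp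
    have yw: "2*inner e (\<Delta> c) \<le> 2*L*(norm e)\<^sup>2 + (norm (\<Delta> c))\<^sup>2/(2*L)"
    proof -
      have "2*inner e (\<Delta> c) = (4*L*inner e (\<Delta> c))/(2*L)" using Lpos by simp
      also have "\<dots> \<le> (4*L^2*(norm e)\<^sup>2 + (norm (\<Delta> c))\<^sup>2)/(2*L)"
        using q2 Lpos by (intro divide_right_mono) auto
      also have "\<dots> = 2*L*(norm e)\<^sup>2 + (norm (\<Delta> c))\<^sup>2/(2*L)"
        using Lpos by (simp add: add_divide_distrib power2_eq_square)
      finally show ?thesis .
    qed
    have ee: "e = (\<beta>s c - \<beta>) - (\<theta>s c - \<theta>)" unfolding e_def d_def u_def by simp
    have ES: "(norm e)\<^sup>2 \<le> 2 * S c"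
    proof -
      have "0 \<le> (norm ((\<beta>s c - \<beta>) + (\<theta>s c - \<theta>)))\<^sup>2" by simp
      thus ?thesis unfolding ee S_def
        by (simp add: power2_norm_eq_inner inner_diff_left inner_diff_right inner_add_left inner_add_right inner_commute algebra_simps)
    qed
    have "-2*\<eta>*(inner (d c) (\<Delta> c) - inner e (\<Delta> c)) + \<eta>^2*(norm (\<Delta> c))\<^sup>2 \<le> - \<eta>*m*(norm (d c))\<^sup>2 + 4*\<eta>*L*S c"
      by (rule scalar_step[OF co yw ES eta_pos eta_le m_pos mL]) simp_all
    thus ?thesis using aw by simp
  qed
  have sumc: "(\<Sum>c\<in>I. p c * (-2*\<eta>*inner u (\<Delta> c) + \<eta>^2 * (norm (\<Delta> c))\<^sup>2))
      \<le> (\<Sum>c\<in>I. p c * (-\<eta>*m*(norm (d c))\<^sup>2 + 4*\<eta>*L*S c))"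
    by (intro sum_mono mult_left_mono perc pnn)
  have l1: "(\<Sum>c\<in>I. p c * (-2*\<eta>*inner u (\<Delta> c) + \<eta>^2 * (norm (\<Delta> c))\<^sup>2))
      = -2*\<eta>*(\<Sum>c\<in>I. p c * inner u (\<Delta> c)) + \<eta>^2 * (\<Sum>c\<in>I. p c * (norm (\<Delta> c))\<^sup>2)"
    unfolding sum_distrib_left sum.distrib[symmetric] by (rule sum.cong) (simp_all add: algebra_simps)
  have r1: "(\<Sum>c\<in>I. p c * (-\<eta>*m*(norm (d c))\<^sup>2 + 4*\<eta>*L*S c))
      = -(\<eta>*m)*(\<Sum>c\<in>I. p c * (norm (d c))\<^sup>2) + 4*\<eta>*L*(\<Sum>c\<in>I. p c * S c)"
    unfolding sum_distrib_left sum.distrib[symmetric] by (rule sum.cong) (simp_all add: algebra_simps)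
  have jg': "\<eta>^2 * (norm g)\<^sup>2 \<le> \<eta>^2 * (\<Sum>c\<in>I. p c * (norm (\<Delta> c))\<^sup>2)"
    using jg by (intro mult_left_mono) auto
  have ju': "(\<eta>*m) * (norm u)\<^sup>2 \<le> (\<eta>*m) * (\<Sum>c\<in>I. p c * (norm (d c))\<^sup>2)"
    using ju eta_pos m_pos by (intro mult_left_mono) auto
  have main: "(norm (u - \<eta> *\<^sub>R g))\<^sup>2 \<le> (1 - \<eta>*m) * (norm u)\<^sup>2 + 4*\<eta>*L*(\<Sum>c\<in>I. p c * S c)"
    using expand ug sumc l1 r1 jg' ju' by (simp add: algebra_simps)
  show ?thesis
    using main unfolding Let_def u_def g_def S_def I_def \<theta>_def \<beta>_def G\<theta>_def G\<beta>_def by simp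
qed

end
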